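(* Let $e_1,\dots,e_p$ be unit vectors in $\mathbb{C}^m$ and $f_1,\dots,f_p$ unit vectors in $\mathbb{C}^n$ such that $[e_i]\neq[e_j]$ for $i\neq j$ and $f_1,\dots,f_p$ are linearly independent. If $\lambda_1,\dots,\lambda_p$ are nonnegative numbers with sum $1$, then the separable state $\omega=\sum_i\lambda_i\omega_{e_i\otimes f_i}$ has a unique representation as a convex combination of pure product states.
   Context: States are on $\mathcal{B}(\mathbb{C}^m\otimes\mathbb{C}^n)$; $\omega_z(A)=(Az,z)$ for a unit vector $z$; a pure product state is a state $\omega_{x\otimes y}$ with $x\in\mathbb{C}^m$, $y\in\mathbb{C}^n$ unit vectors. $[x]$ is the line spanned by $x$. Uniqueness means: any two expressions of $\omega$ as convex combinations of pure product states (with positive weights, combining equal terms) coincide. *)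

theory Defs
  imports "HOL-Analysis.Analysis"
begin

text \<open>C^m is modelled as complex^'m, C^n as complex^'n, and the tensor product
C^m (x) C^n as complex^('m \<times> 'n). Operators in B(C^m (x) C^n) are matrices.\<close>

type_synonym ('m,'n) op = "complex^('m \<times> 'n)^('m \<times> 'n)"
type_synonym ('m,'n) functional = "('m,'n) op \<Rightarrow> complex"

definition tensor :: "complex^'m \<Rightarrow> complex^'n \<Rightarrow> complex^('m \<times> 'n)" where
  "tensor x y = (\<chi> k. x $ fst k * y $ snd k)"

definition vstate :: "complex^'k \<Rightarrow> complex^'k^'k \<Rightarrow> complex" where
  "vstate z A = (\<Sum>k\<in>UNIV. (A *v z) $ k * cnj (z $ k))"

definition pure_product_state :: "('m::finite,'n::finite) functional \<Rightarrow> bool" where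
  "pure_product_state s \<longleftrightarrow>
     (\<exists>(x::complex^'m) (y::complex^'n). norm x = 1 \<and> norm y = 1 \<and> s = vstate (tensor x y))"

definition line :: "complex^'k \<Rightarrow> (complex^'k) set" where
  "line x = {c *s x | c. True}"

definition lin_indep_family :: "nat \<Rightarrow> (nat \<Rightarrow> complex^'k) \<Rightarrow> bool" where
  "lin_indep_family p f \<longleftrightarrow>
     (\<forall>c::nat \<Rightarrow> complex. (\<Sum>i<p. c i *s f i) = 0 \<longrightarrow> (\<forall>i<p. c i = 0))"

text \<open>A convex combination of pure product states, with positive weights and
equal terms combined: a finitely supported weight function mu on states.\<close>
definition pps_representation ::
    "('m::finite,'n::finite) functional \<Rightarrow> (('m,'n) functional \<Rightarrow> real) \<Rightarrow> bool" where
  "pps_representation \<omega> \<mu> \<longleftrightarrow>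
     finite {s. \<mu> s \<noteq> 0} \<and>
     (\<forall>s. \<mu> s \<ge> 0) \<and>
     (\<forall>s. \<mu> s \<noteq> 0 \<longrightarrow> pure_product_state s) \<and>
     (\<Sum>s\<in>{s. \<mu> s \<noteq> 0}. \<mu> s) = 1 \<and>
     (\<forall>A. \<omega> A = (\<Sum>s\<in>{s. \<mu> s \<noteq> 0}. complex_of_real (\<mu> s) * s A))"

end

theory Submission imports Defs begin

definition cip :: "complex^'k \<Rightarrow> complex^'k \<Rightarrow> complex" where
  "cip x y = (\<Sum>k\<in>UNIV. x$k * cnj (y$k))"

lemma vstate_unit:
  "vstate z (\<chi> a b. if a = i \<and> b = j then 1 else 0) = z$j * cnj (z$i)"
proof -
  have "\<And>k. (\<Sum>ja\<in>UNIV. if k = i \<and> ja = j then z $ j else (0::complex)) = (if k = i then z$j else 0)"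
    by (cases "k = i") auto
  then have "(\<chi> a b. if a = i \<and> b = j then 1 else 0) *v z = (\<chi> k. if k = i then z$j else 0)"
    unfolding matrix_vector_mult_def by (simp add: vec_eq_iff if_distrib if_distribR cong: if_cong)
  then show ?thesis unfolding vstate_def
    by (simp add: if_distrib if_distribR cong: if_cong)
qed

lemma vstate_rank1:
  "vstate z (\<chi> a b. v$a * cnj (v$b)) = of_real ((cmod (cip z v))^2)"
proof -
  have "vstate z (\<chi> a b. v$a * cnj (v$b)) = (\<Sum>a\<in>UNIV. v$a * cnj (z$a) * cip z v)"
    unfolding vstate_def matrix_vector_mult_def cip_def
    by (auto simp: sum_distrib_left mult_ac intro!: sum.cong)
  also have "\<dots> = cnj (cip z v) * cip z v"
    unfolding cip_def by (simp add: sum_distrib_right mult_ac)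
  finally show ?thesis by (metis complex_norm_square mult.commute)
qed

lemma vstate_scale0: "vstate (c *s z) A = (c * cnj c) * vstate z A"
  unfolding vstate_def matrix_vector_mult_def
  by (simp add: sum_distrib_left sum_distrib_right mult_ac)

lemma vstate_scale: "vstate (c *s z) A = of_real ((cmod c)^2) * vstate z A"
  by (simp only: vstate_scale0 complex_norm_square)

lemma norm_tensor: "norm (tensor x y) = norm x * norm y"
proof -
  have "(norm (tensor x y))^2 = (norm x)^2 * (norm y)^2"
    unfolding power2_norm_eq_inner inner_vec_def tensor_def
    by (simp add: sum.cartesian_product sum_product case_prod_beta
         inner_complex_def algebra_simps flip: UNIV_Times_UNIV)
  then show ?thesis
    by (metis norm_ge_zero power2_eq_imp_eq power_mult_distrib zero_le_mult_iff)
qed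

lemma indep_tensor:
  fixes e :: "nat \<Rightarrow> complex^'m::finite" and f :: "nat \<Rightarrow> complex^'n::finite"
  assumes fi: "lin_indep_family p f" and e0: "\<forall>k<p. e k \<noteq> 0"
  shows "lin_indep_family p (\<lambda>k. tensor (e k) (f k))"
  unfolding lin_indep_family_def
proof (intro allI impI)
  fix c :: "nat \<Rightarrow> complex" and k
  assume s0: "(\<Sum>i<p. c i *s tensor (e i) (f i)) = 0" and k: "k < p"
  have ca: "c k * e k $ a = 0" for a
  proof -
    have "(\<Sum>i<p. (c i * e i $ a) *s f i) = 0"
    proof (subst vec_eq_iff, intro allI)
      fix b
      have "(\<Sum>i<p. c i *s tensor (e i) (f i)) $ (a,b) = 0" using s0 by simp
      then show "(\<Sum>i<p. (c i * e i $ a) *s f i) $ b = 0 $ b"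
        by (simp add: tensor_def mult_ac)
    qed
    then show ?thesis using fi k unfolding lin_indep_family_def
      by (auto elim!: allE[where x="\<lambda>i. c i * e i $ a"])
  qed
  obtain a where "e k $ a \<noteq> 0" using e0 k by (metis vec_eq_iff zero_index)
  then show "c k = 0" using ca[of a] by simp
qed

lemma indep_dens:
  fixes u :: "nat \<Rightarrow> complex^'k::finite"
  assumes ui: "lin_indep_family p u" and u0: "\<forall>k<p. u k \<noteq> 0"
    and h: "\<forall>a b. (\<Sum>k<p. d k * (u k $ b * cnj (u k $ a))) = 0"
  shows "\<forall>k<p. d k = 0"
proof (intro allI impI)
  fix k assume k: "k < p"
  have ca: "d k * cnj (u k $ a) = 0" for a
  proof -
    have "(\<Sum>i<p. (d i * cnj (u i $ a)) *s u i) = 0"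
    proof (subst vec_eq_iff, intro allI)
      fix b
      show "(\<Sum>i<p. (d i * cnj (u i $ a)) *s u i) $ b = 0 $ b"
        using h[rule_format, of b a] by (simp add: mult_ac)
    qed
    then show ?thesis using ui k unfolding lin_indep_family_def
      by (auto elim!: allE[where x="\<lambda>i. d i * cnj (u i $ a)"])
  qed
  obtain a where "u k $ a \<noteq> 0" using u0 k by (metis vec_eq_iff zero_index)
  then show "d k = 0" using ca[of a] by simp
qed

lemma line_scale: "t \<noteq> 0 \<Longrightarrow> line (t *s x) = line x"
  unfolding line_def
proof (intro set_eqI iffI)
  fix z assume "t \<noteq> 0" "z \<in> {c *s (t *s x) |c. True}"
  then show "z \<in> {c *s x |c. True}" by (auto simp: vector_smult_assoc)
next
  fix z assume t: "t \<noteq> 0" and "z \<in> {c *s x |c. True}"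
  then obtain c where "z = c *s x" by auto
  then have "z = (c / t) *s (t *s x)" using t by (simp add: vector_smult_assoc)
  then show "z \<in> {c *s (t *s x) |c. True}" by blast
qed

lemma core_one_term:
  fixes e :: "nat \<Rightarrow> complex^'m::finite" and f :: "nat \<Rightarrow> complex^'n::finite"
  assumes fi: "lin_indep_family p f" and e0: "\<forall>k<p. e k \<noteq> 0"
    and ln: "\<forall>i<p. \<forall>j<p. i \<noteq> j \<longrightarrow> line (e i) \<noteq> line (e j)"
    and x0: "x \<noteq> 0"
    and w: "tensor x y = (\<Sum>k<p. c k *s tensor (e k) (f k))"
    and w0: "tensor x y \<noteq> 0"
  shows "\<exists>k<p. tensor x y = c k *s tensor (e k) (f k)"
proof -
  obtain a0 where a0: "x $ a0 \<noteq> 0" using x0 by (metis vec_eq_iff zero_index)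
  have comp: "x $ a * y $ b = (\<Sum>k<p. c k * e k $ a * f k $ b)" for a b
  proof -
    have "tensor x y $ (a,b) = (\<Sum>k<p. c k *s tensor (e k) (f k)) $ (a,b)" using w by simp
    then show ?thesis by (simp add: tensor_def mult_ac)
  qed
  have hy: "y $ b = (\<Sum>k<p. (c k * e k $ a0 / x $ a0) * f k $ b)" for b
  proof -
    have "y $ b = (x $ a0 * y $ b) / x $ a0" using a0 by simp
    also have "\<dots> = (\<Sum>k<p. (c k * e k $ a0 / x $ a0) * f k $ b)"
      unfolding comp by (simp add: sum_divide_distrib)
    finally show ?thesis .
  qed
  have key: "c k * e k $ a = x $ a * (c k * e k $ a0 / x $ a0)" if k: "k < p" for k a
  proof -
    have "(\<Sum>i<p. (c i * e i $ a - x $ a * (c i * e i $ a0 / x $ a0)) *s f i) = 0"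
    proof (subst vec_eq_iff, intro allI)
      fix b
      have "(\<Sum>i<p. (c i * e i $ a - x $ a * (c i * e i $ a0 / x $ a0)) * f i $ b)
          = (\<Sum>i<p. c i * e i $ a * f i $ b) - x $ a * (\<Sum>i<p. (c i * e i $ a0 / x $ a0) * f i $ b)"
        by (simp add: sum_subtractf sum_distrib_left algebra_simps)
      also have "\<dots> = 0" using comp[of a b] hy[of b] by simp
      finally show "(\<Sum>i<p. (c i * e i $ a - x $ a * (c i * e i $ a0 / x $ a0)) *s f i) $ b = 0 $ b"
        by (simp only: sum_component vector_smult_component zero_index)
    qed
    then have "\<forall>i<p. c i * e i $ a - x $ a * (c i * e i $ a0 / x $ a0) = 0"
      using fi unfolding lin_indep_family_def
      by (auto elim!: allE[where x="\<lambda>i. c i * e i $ a - x $ a * (c i * e i $ a0 / x $ a0)"])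
    then show ?thesis using k by simp
  qed
  have ek: "e k = (e k $ a0 / x $ a0) *s x" if "k < p" "c k \<noteq> 0" for k
  proof (subst vec_eq_iff, intro allI)
    fix a
    have "c k * e k $ a = c k * ((e k $ a0 / x $ a0) * x $ a)" using key[OF that(1), of a]
      by (simp add: algebra_simps)
    then have "e k $ a = (e k $ a0 / x $ a0) * x $ a" using that(2) mult_left_cancel by blast
    then show "e k $ a = ((e k $ a0 / x $ a0) *s x) $ a" by simp
  qed
  have tk: "e k $ a0 / x $ a0 \<noteq> 0" if "k < p" "c k \<noteq> 0" for k
  proof
    assume t0: "e k $ a0 / x $ a0 = 0"
    have "e k = (e k $ a0 / x $ a0) *s x" using ek[OF that] .
    then have "e k = 0" unfolding t0 by simp
    then show False using e0 that by simp
  qed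
  obtain k where k: "k < p" "c k \<noteq> 0"
  proof (rule ccontr)
    assume "\<not> thesis"
    then have "\<forall>k<p. c k = 0" using that by blast
    then have "tensor x y = 0" unfolding w by simp
    then show False using w0 by simp
  qed
  have others: "c j = 0" if "j < p" "j \<noteq> k" for j
  proof (rule ccontr)
    assume cj: "c j \<noteq> 0"
    have "line (e j) = line x" using ek[OF that(1) cj] tk[OF that(1) cj] line_scale by metis
    moreover have "line (e k) = line x" using ek[OF k] tk[OF k] line_scale by metis
    ultimately show False using ln that k by metis
  qed
  have "(\<Sum>j<p. c j *s tensor (e j) (f j)) = (\<Sum>j<p. if j = k then c k *s tensor (e k) (f k) else 0)"
    using others by (intro sum.cong) auto
  also have "\<dots> = c k *s tensor (e k) (f k)" using k by simp
  finally show ?thesis using w k by auto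
qed

lemma cip_cnj: "cip a b = cnj (cip b a)"
  unfolding cip_def by (simp add: mult.commute)

lemma cip_scale_right: "cip a (c *s b) = cnj c * cip a b"
  unfolding cip_def by (simp add: sum_distrib_left mult_ac)

lemma inner_cip: "inner a b = Re (cip a b)"
  unfolding inner_vec_def cip_def by (simp add: Re_sum inner_complex_def)

lemma scaleR_vec_complex: "r *\<^sub>R (z::complex^'k) = (of_real r) *s z"
  apply (simp add: vec_eq_iff)
  apply (simp add: scaleR_conv_of_real)
  done

lemma range_lemma:
  fixes u :: "nat \<Rightarrow> complex^'k::finite"
  assumes h: "\<forall>v. (\<forall>k<p. cip (u k) v = 0) \<longrightarrow> cip w v = 0"
  shows "\<exists>c. w = (\<Sum>k<p. c k *s u k)"
proof -
  define S where "S = u ` {..<p} \<union> (\<lambda>z. \<i> *s z) ` u ` {..<p}"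
  obtain y z where y: "y \<in> span S" and oz: "\<And>w'. w' \<in> span S \<Longrightarrow> orthogonal z w'"
    and wyz: "w = y + z"
    using orthogonal_subspace_decomp_exists by blast
  have "cip (u k) z = 0" if k: "k < p" for k
  proof -
    have "u k \<in> span S" "\<i> *s u k \<in> span S" using k by (auto simp: S_def intro!: span_base)
    then have "inner z (u k) = 0" "inner z (\<i> *s u k) = 0" using oz by (auto simp: orthogonal_def)
    then have "Re (cip z (u k)) = 0" "Im (cip z (u k)) = 0"
      by (auto simp: inner_cip cip_scale_right)
    then have "cip z (u k) = 0" by (simp add: complex_eq_iff)
    then show ?thesis by (subst cip_cnj) simp
  qed
  then have "cip w z = 0" using h by blast
  then have iwz: "inner w z = 0" by (simp add: inner_cip)
  have "inner y z = 0" using oz[OF y] by (simp add: orthogonal_def inner_commute)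
  then have "inner z z = 0" using iwz unfolding wyz by (simp add: inner_add_left)
  then have "z = 0" by simp
  then have wS: "w \<in> span S" using y wyz by simp
  show ?thesis
    using wS
  proof (induction rule: span_induct)
    case base
    show ?case unfolding subspace_def
    proof (intro conjI ballI allI)
      show "0 \<in> Collect (\<lambda>w. \<exists>c. w = (\<Sum>k<p. c k *s u k))"
        by (auto intro!: exI[where x="\<lambda>_. 0"])
    next
      fix a b assume "a \<in> Collect (\<lambda>w. \<exists>c. w = (\<Sum>k<p. c k *s u k))"
        "b \<in> Collect (\<lambda>w. \<exists>c. w = (\<Sum>k<p. c k *s u k))"
      then obtain ca cb where "a = (\<Sum>k<p. ca k *s u k)" "b = (\<Sum>k<p. cb k *s u k)" by auto
      then have "a + b = (\<Sum>k<p. (ca k + cb k) *s u k)"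
        by (simp add: sum.distrib vector_sadd_rdistrib)
      then show "a + b \<in> Collect (\<lambda>w. \<exists>c. w = (\<Sum>k<p. c k *s u k))"
        by (auto intro!: exI[where x="\<lambda>k. ca k + cb k"])
    next
      fix r :: real and a assume "a \<in> Collect (\<lambda>w. \<exists>c. w = (\<Sum>k<p. c k *s u k))"
      then obtain ca where "a = (\<Sum>k<p. ca k *s u k)" by auto
      then have "r *\<^sub>R a = (\<Sum>k<p. (of_real r * ca k) *s u k)"
        by (simp add: scaleR_vec_complex vec_eq_iff sum_distrib_left mult_ac)
      then show "r *\<^sub>R a \<in> Collect (\<lambda>w. \<exists>c. w = (\<Sum>k<p. c k *s u k))"
        by (auto intro!: exI[where x="\<lambda>k. of_real r * ca k"])
    qed
  next
    case (step x)
    have "\<exists>j<p. \<exists>t. x = t *s u j" using step unfolding S_def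
      by (auto simp: image_iff) (metis vector_smult_lid)
    then obtain j t where j: "j < p" and xt: "x = t *s u j" by blast
    have "(\<Sum>k<p. (if k = j then t else 0) *s u k) = (\<Sum>k<p. if k = j then t *s u j else 0)"
      by (intro sum.cong) auto
    also have "\<dots> = x" using j xt by simp
    finally show ?case by (auto intro!: exI[where x="\<lambda>k. if k = j then t else 0"])
  qed
qed

lemma cip_scale_left: "cip (c *s a) b = c * cip a b"
  unfolding cip_def by (simp add: sum_distrib_left mult_ac)

lemma norm_smult_c: "norm (c *s (z::complex^'k::finite)) = cmod c * norm z"
proof -
  have "inner (c *s z) (c *s z) = Re ((c * cnj c) * cip z z)"
    by (simp add: inner_cip cip_scale_left cip_scale_right mult_ac)
  also have "\<dots> = Re (of_real ((cmod c)^2) * cip z z)" by (simp only: complex_norm_square)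
  also have "\<dots> = (cmod c)^2 * inner z z" by (simp add: inner_cip)
  finally have "(norm (c *s z))^2 = (cmod c * norm z)^2"
    by (simp only: power2_norm_eq_inner power_mult_distrib)
  then show ?thesis by (simp add: power2_eq_imp_eq)
qed

theorem mainTheorem5:
  fixes p :: nat
    and e :: "nat \<Rightarrow> complex^'m::finite"
    and f :: "nat \<Rightarrow> complex^'n::finite"
    and lam :: "nat \<Rightarrow> real"
  assumes "\<forall>i<p. norm (e i) = 1"
    and "\<forall>i<p. norm (f i) = 1"
    and "\<forall>i<p. \<forall>j<p. i \<noteq> j \<longrightarrow> line (e i) \<noteq> line (e j)"
    and "lin_indep_family p f"
    and "\<forall>i<p. lam i \<ge> 0"
    and "(\<Sum>i<p. lam i) = 1"
  shows "\<exists>!\<mu>. pps_representation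
                 (\<lambda>A. \<Sum>i<p. complex_of_real (lam i) * vstate (tensor (e i) (f i)) A) \<mu>"
proof -
  define u where "u k = tensor (e k) (f k)" for k
  define st where "st k = vstate (u k)" for k
  define \<omega> where "\<omega> = (\<lambda>A. \<Sum>i<p. complex_of_real (lam i) * vstate (tensor (e i) (f i)) A)"
  have \<omega>: "\<omega> A = (\<Sum>i<p. of_real (lam i) * st i A)" for A
    unfolding \<omega>_def st_def u_def by simp
  have e0: "\<forall>k<p. e k \<noteq> 0" using assms(1) by auto
  have un: "norm (u k) = 1" if "k < p" for k
    using that assms(1,2) by (simp add: u_def norm_tensor)
  have u0: "\<forall>k<p. u k \<noteq> 0" using un by fastforce
  have ui: "lin_indep_family p u"
    using indep_tensor[OF assms(4) e0] by (simp add: u_def[abs_def])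
  have stE: "st k (\<chi> a b. if a = i \<and> b = j then 1 else 0) = u k $ j * cnj (u k $ i)" for k i j
    by (simp add: st_def vstate_unit)
  have inj: "inj_on st {..<p}"
  proof (rule inj_onI)
    fix k l assume k: "k \<in> {..<p}" and l: "l \<in> {..<p}" and eq: "st k = st l"
    show "k = l"
    proof (rule ccontr)
      assume kl: "k \<noteq> l"
      define d where "d j = (if j = k then 1 else 0) - (if j = l then 1 else (0::complex))" for j
      have "\<forall>a b. (\<Sum>j<p. d j * (u j $ b * cnj (u j $ a))) = 0"
      proof (intro allI)
        fix a b
        have "(\<Sum>j<p. d j * (u j $ b * cnj (u j $ a)))
              = u k $ b * cnj (u k $ a) - u l $ b * cnj (u l $ a)"
        proof -
          have "(\<Sum>j<p. d j * (u j $ b * cnj (u j $ a)))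
            = (\<Sum>j<p. (if j = k then u j $ b * cnj (u j $ a) else 0))
              - (\<Sum>j<p. (if j = l then u j $ b * cnj (u j $ a) else 0))"
            unfolding d_def sum_subtractf[symmetric] by (intro sum.cong) auto
          then show ?thesis using k l by simp
        qed
        also have "\<dots> = 0" using stE[of k a b] stE[of l a b] eq by simp
        finally show "(\<Sum>j<p. d j * (u j $ b * cnj (u j $ a))) = 0" .
      qed
      then have "d k = 0" using indep_dens[OF ui u0] k by blast
      then show False using kl by (simp add: d_def)
    qed
  qed
  have rep: "(\<forall>s. \<mu> s \<noteq> 0 \<longrightarrow> s \<in> st ` {..<p}) \<and> (\<forall>k<p. \<mu> (st k) = lam k)"
    if R: "pps_representation \<omega> \<mu>" for \<mu>
  proof -
    define T where "T = {s. \<mu> s \<noteq> 0}"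
    from R have fT: "finite T" and nn: "\<forall>s. \<mu> s \<ge> 0"
      and pure: "\<forall>s. \<mu> s \<noteq> 0 \<longrightarrow> pure_product_state s"
      and eq: "\<forall>A. \<omega> A = (\<Sum>s\<in>T. of_real (\<mu> s) * s A)"
      unfolding pps_representation_def T_def by auto
    have sub: "T \<subseteq> st ` {..<p}"
    proof
      fix s assume sT: "s \<in> T"
      then have ms: "\<mu> s > 0" using nn T_def by (simp add: order_less_le)
      obtain x y where nx: "norm x = 1" and ny: "norm y = 1" and sx: "s = vstate (tensor x y)"
        using pure sT T_def unfolding pure_product_state_def by auto
      define w where "w = tensor x y"
      have hw: "\<forall>v. (\<forall>k<p. cip (u k) v = 0) \<longrightarrow> cip w v = 0"
      proof (intro allI impI)
        fix v assume hv: "\<forall>k<p. cip (u k) v = 0"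
        define M where "M = (\<chi> a b. v$a * cnj (v$b))"
        have "\<omega> M = (\<Sum>i<p. of_real (lam i) * of_real ((cmod (cip (u i) v))^2))"
          unfolding \<omega> M_def st_def vstate_rank1 ..
        also have "\<dots> = 0" using hv by (intro sum.neutral) auto
        finally have \<omega>0: "\<omega> M = 0" .
        have pos: "s' M = of_real (Re (s' M)) \<and> Re (s' M) \<ge> 0" if s'T: "s' \<in> T" for s'
        proof -
          obtain x' y' where "s' = vstate (tensor x' y')"
            using pure s'T T_def unfolding pure_product_state_def by auto
          then show ?thesis by (simp add: M_def vstate_rank1)
        qed
        have "0 = (\<Sum>s'\<in>T. of_real (\<mu> s') * s' M)" using eq \<omega>0 by simp
        also have "\<dots> = (\<Sum>s'\<in>T. of_real (\<mu> s' * Re (s' M)))"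
        proof (intro sum.cong refl)
          fix x assume "x \<in> T"
          then have "x M = of_real (Re (x M))" using pos by blast
          then show "complex_of_real (\<mu> x) * x M = complex_of_real (\<mu> x * Re (x M))"
            by (metis of_real_mult)
        qed
        also have "\<dots> = of_real (\<Sum>s'\<in>T. \<mu> s' * Re (s' M))" by (rule of_real_sum[symmetric])
        finally have "of_real (\<Sum>s'\<in>T. \<mu> s' * Re (s' M)) = (0::complex)" by (rule sym)
        then have "(\<Sum>s'\<in>T. \<mu> s' * Re (s' M)) = 0" by (rule of_real_eq_0_iff[THEN iffD1])
        then have "\<forall>s'\<in>T. \<mu> s' * Re (s' M) = 0"
        proof -
          have nn': "\<forall>s'\<in>T. 0 \<le> \<mu> s' * Re (s' M)"
          proof
            fix s' assume s'T: "s' \<in> T"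
            have "Re (s' M) \<ge> 0" using pos[OF s'T] by (rule conjunct2)
            then show "0 \<le> \<mu> s' * Re (s' M)" using nn by (simp add: mult_nonneg_nonneg)
          qed
          have "((\<Sum>s'\<in>T. \<mu> s' * Re (s' M)) = 0) = (\<forall>s'\<in>T. \<mu> s' * Re (s' M) = 0)"
            by (rule sum_nonneg_eq_0_iff[OF fT]) (use nn' in blast)
          then show ?thesis using \<open>(\<Sum>s'\<in>T. \<mu> s' * Re (s' M)) = 0\<close> by (rule iffD1)
        qed
        then have "Re (s M) = 0" using sT ms by auto
        then have "(cmod (cip w v))^2 = 0" by (simp add: sx w_def M_def vstate_rank1)
        then show "cip w v = 0" by simp
      qed
      obtain c where wc: "w = (\<Sum>k<p. c k *s u k)" using range_lemma[OF hw] by blast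
      have x0: "x \<noteq> 0" using nx by auto
      have nw: "norm w = 1" using nx ny by (simp add: w_def norm_tensor)
      then have w0: "w \<noteq> 0" by auto
      obtain k where k: "k < p" "w = c k *s u k"
        using core_one_term[OF assms(4) e0 assms(3) x0, of y c] wc w0 unfolding w_def u_def by auto
      have "cmod (c k) = 1" using nw k un[of k] by (simp add: norm_smult_c)
      then have "s = st k" unfolding sx st_def
        by (simp add: fun_eq_iff vstate_scale k(2)[unfolded w_def])
      then show "s \<in> st ` {..<p}" using k by auto
    qed
    have lin: "(\<Sum>k<p. (of_real (\<mu> (st k)) - of_real (lam k)) * st k A) = 0" for A
    proof -
      have "\<omega> A = (\<Sum>s\<in>T. of_real (\<mu> s) * s A)" using eq by simp
      also have "\<dots> = (\<Sum>s\<in>st ` {..<p}. of_real (\<mu> s) * s A)"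
        using sub by (intro sum.mono_neutral_left) (auto simp: T_def)
      also have "\<dots> = (\<Sum>k<p. of_real (\<mu> (st k)) * st k A)"
        using inj by (simp add: sum.reindex)
      finally show ?thesis using \<omega>[of A] by (simp add: left_diff_distrib sum_subtractf)
    qed
    have "\<forall>a b. (\<Sum>k<p. (of_real (\<mu> (st k)) - of_real (lam k)) * (u k $ b * cnj (u k $ a))) = 0"
    proof (intro allI)
      fix a b
      show "(\<Sum>k<p. (of_real (\<mu> (st k)) - of_real (lam k)) * (u k $ b * cnj (u k $ a))) = 0"
        using lin[of "\<chi> a' b'. if a' = a \<and> b' = b then 1 else 0"] by (simp only: stE)
    qed
    then have "\<forall>k<p. of_real (\<mu> (st k)) - of_real (lam k) = (0::complex)"
      by (rule indep_dens[OF ui u0])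
    then have "\<forall>k<p. \<mu> (st k) = lam k" by simp
    then show ?thesis using sub T_def by auto
  qed
  define \<nu> where "\<nu> s = (\<Sum>k\<in>{k\<in>{..<p}. st k = s}. lam k)" for s
  have img0: "\<nu> s = 0" if "s \<notin> st ` {..<p}" for s
    using that unfolding \<nu>_def by (auto intro!: sum.neutral)
  have supp: "{s. \<nu> s \<noteq> 0} \<subseteq> st ` {..<p}" using img0 by blast
  have sum_img: "(\<Sum>s\<in>st ` {..<p}. g (\<nu> s) s) = (\<Sum>s\<in>{s. \<nu> s \<noteq> 0}. g (\<nu> s) s)"
    if "\<And>s. g 0 s = 0" for g :: "real \<Rightarrow> _ \<Rightarrow> 'z::comm_monoid_add"
    using supp that by (intro sum.mono_neutral_right) auto
  have Rnu: "pps_representation \<omega> \<nu>"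
    unfolding pps_representation_def
  proof (intro conjI allI impI)
    show "finite {s. \<nu> s \<noteq> 0}" using supp by (rule finite_subset) auto
  next
    fix s show "\<nu> s \<ge> 0" unfolding \<nu>_def using assms(5) by (auto intro!: sum_nonneg)
  next
    fix s assume "\<nu> s \<noteq> 0"
    then obtain k where k: "k < p" "s = st k" using img0 by blast
    then show "pure_product_state s" unfolding pure_product_state_def st_def u_def
      using assms(1,2) by blast
  next
    have "(\<Sum>s\<in>{s. \<nu> s \<noteq> 0}. \<nu> s) = (\<Sum>s\<in>st ` {..<p}. \<nu> s)"
      using sum_img[of "\<lambda>r s. r"] by simp
    also have "\<dots> = (\<Sum>k<p. lam k)" unfolding \<nu>_def
      by (rule sum.image_gen[symmetric]) simp
    finally show "(\<Sum>s\<in>{s. \<nu> s \<noteq> 0}. \<nu> s) = 1" using assms(6) by simp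
  next
    fix A
    have "\<omega> A = (\<Sum>k<p. of_real (lam k) * st k A)" by (rule \<omega>)
    also have "\<dots> = (\<Sum>s\<in>st ` {..<p}. \<Sum>k\<in>{k\<in>{..<p}. st k = s}. of_real (lam k) * st k A)"
      by (rule sum.image_gen) simp
    also have "\<dots> = (\<Sum>s\<in>st ` {..<p}. of_real (\<nu> s) * s A)"
      unfolding \<nu>_def of_real_sum sum_distrib_right by (intro sum.cong) auto
    also have "\<dots> = (\<Sum>s\<in>{s. \<nu> s \<noteq> 0}. of_real (\<nu> s) * s A)"
      using sum_img[of "\<lambda>r s. of_real r * s A"] by simp
    finally show "\<omega> A = (\<Sum>s\<in>{s. \<nu> s \<noteq> 0}. complex_of_real (\<nu> s) * s A)" .
  qed
  have uniq: "\<mu> = \<nu>" if "pps_representation \<omega> \<mu>" for \<mu>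
  proof
    fix s
    have A: "\<forall>s. \<mu> s \<noteq> 0 \<longrightarrow> s \<in> st ` {..<p}" "\<forall>k<p. \<mu> (st k) = lam k"
      using rep[OF that] by auto
    have B: "\<forall>s. \<nu> s \<noteq> 0 \<longrightarrow> s \<in> st ` {..<p}" "\<forall>k<p. \<nu> (st k) = lam k"
      using rep[OF Rnu] by auto
    show "\<mu> s = \<nu> s"
    proof (cases "s \<in> st ` {..<p}")
      case True then show ?thesis using A(2) B(2) by auto
    next
      case False then show ?thesis using A(1) B(1) by metis
    qed
  qed
  show ?thesis unfolding \<omega>_def[symmetric] using Rnu uniq by blast
qed

end
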